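(* Let $0<\alpha<1$ and let $g_\alpha$ be the $L^\infty$ Lorentz metric on $\mathbb{R}^4$ with global coordinates $(t,x,y,z)$ given by $g_\alpha = -dt^2 + \rho$, where $$\rho = \Big(\tfrac{1+\alpha^2}{2}+\tfrac{1-\alpha^2}{2}f_1\Big)dx^2 + \Big(\tfrac{1+\alpha^2}{2}-\tfrac{1-\alpha^2}{2}f_1\Big)dy^2 + (1-\alpha^2)f_2\,dx\,dy + dz^2,$$ with $f_1(x,y)=\frac{x^2-y^2}{x^2+y^2}$, $f_2(x,y)=\frac{2xy}{x^2+y^2}$ for $(x,y)\neq(0,0)$. Then: (i) for every $(x,y,z)$ with $(x,y)\ne(0,0)$ and every $v=(v_1,v_2,v_3)\in\mathbb{R}^3$ one has $\rho(x,y,z)(v,v)\ge \alpha^2(v_1^2+v_2^2)+v_3^2$; in particular $\rho$ is an $L^\infty$ Riemannian metric on $\mathbb{R}^3$; (ii) for every $t_0\in\mathbb{R}$, every inextendible $C^1$ curve $\gamma=(\gamma_0,\gamma_1)\colon I\to\mathbb{R}\times\mathbb{R}^3$ ($I$ an open interval) with $\dot\gamma(s)\neq 0$ for all $s$ and $g_\alpha(\gamma(s))(\dot\gamma(s),\dot\gamma(s))<0$ for almost every $s$ meets the hypersurface $\{t_0\}\times\mathbb{R}^3$ exactly once.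
   Context: Here $f_1,f_2$ are Borel measurable bounded functions (their values on the null set $\{x=y=0\}$ are irrelevant), so $s\mapsto g_\alpha(\gamma(s))(\dot\gamma(s),\dot\gamma(s))$ is Borel measurable for $C^1$ curves. A curve is inextendible if it has no endpoint (no limit) at either end of its parameter interval. *)

theory Defs
  imports "HOL-Analysis.Analysis"
begin

text \<open>Coefficient functions. Their values at the origin are irrelevant in the paper;
  we leave them as arbitrary parameters c1, c2.\<close>
definition f1 :: "real \<Rightarrow> real \<Rightarrow> real \<Rightarrow> real" where
  "f1 c1 x y = (if x = 0 \<and> y = 0 then c1 else (x\<^sup>2 - y\<^sup>2) / (x\<^sup>2 + y\<^sup>2))"

definition f2 :: "real \<Rightarrow> real \<Rightarrow> real \<Rightarrow> real" where
  "f2 c2 x y = (if x = 0 \<and> y = 0 then c2 else (2 * x * y) / (x\<^sup>2 + y\<^sup>2))"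

text \<open>The Riemannian part rho at the point (x,y,z), evaluated on (v,v) with v=(v1,v2,v3).
  The term (1-alpha^2) f2 dx dy is the symmetric product, contributing (1-alpha^2) f2 v1 v2.\<close>
definition rho :: "real \<Rightarrow> real \<Rightarrow> real \<Rightarrow> real \<times> real \<times> real \<Rightarrow> real \<times> real \<times> real \<Rightarrow> real" where
  "rho \<alpha> c1 c2 p v = (case p of (x, y, z) \<Rightarrow> case v of (v1, v2, v3) \<Rightarrow>
      ((1 + \<alpha>\<^sup>2) / 2 + (1 - \<alpha>\<^sup>2) / 2 * f1 c1 x y) * v1\<^sup>2
    + ((1 + \<alpha>\<^sup>2) / 2 - (1 - \<alpha>\<^sup>2) / 2 * f1 c1 x y) * v2\<^sup>2
    + (1 - \<alpha>\<^sup>2) * f2 c2 x y * v1 * v2 + v3\<^sup>2)"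

definition g_alpha :: "real \<Rightarrow> real \<Rightarrow> real \<Rightarrow> real \<times> (real \<times> real \<times> real)
    \<Rightarrow> real \<times> (real \<times> real \<times> real) \<Rightarrow> real" where
  "g_alpha \<alpha> c1 c2 p w = - (fst w)\<^sup>2 + rho \<alpha> c1 c2 (snd p) (snd w)"

definition upper_end :: "real set \<Rightarrow> real filter" where
  "upper_end I = (if bdd_above I then at_left (Sup I) else at_top)"

definition lower_end :: "real set \<Rightarrow> real filter" where
  "lower_end I = (if bdd_below I then at_right (Inf I) else at_bot)"

definition inextendible :: "real set \<Rightarrow> (real \<Rightarrow> 'a::topological_space) \<Rightarrow> bool" where
  "inextendible I \<gamma> \<longleftrightarrow> \<not> (\<exists>L. (\<gamma> \<longlongrightarrow> L) (upper_end I)) \<and> \<not> (\<exists>L. (\<gamma> \<longlongrightarrow> L) (lower_end I))"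

end

theory Submission
  imports Defs
begin


lemma rho_eq:
  assumes "(x, y) \<noteq> ((0::real), (0::real))"
  shows "rho \<alpha> c1 c2 (x, y, z) (v1, v2, v3) =
     \<alpha>\<^sup>2 * (v1\<^sup>2 + v2\<^sup>2) + v3\<^sup>2 + (1 - \<alpha>\<^sup>2) * (x * v1 + y * v2)\<^sup>2 / (x\<^sup>2 + y\<^sup>2)"
proof -
  have ne: "\<not> (x = 0 \<and> y = 0)" using assms by auto
  have r: "x\<^sup>2 + y\<^sup>2 > 0" using ne by (simp add: sum_power2_gt_zero_iff)
  have alg: "((1 + \<alpha>\<^sup>2) / 2 + (1 - \<alpha>\<^sup>2) / 2 * ((x\<^sup>2 - y\<^sup>2) / (x\<^sup>2 + y\<^sup>2))) * v1\<^sup>2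
    + ((1 + \<alpha>\<^sup>2) / 2 - (1 - \<alpha>\<^sup>2) / 2 * ((x\<^sup>2 - y\<^sup>2) / (x\<^sup>2 + y\<^sup>2))) * v2\<^sup>2
    + (1 - \<alpha>\<^sup>2) * ((2 * x * y) / (x\<^sup>2 + y\<^sup>2)) * v1 * v2 + v3\<^sup>2 =
     \<alpha>\<^sup>2 * (v1\<^sup>2 + v2\<^sup>2) + v3\<^sup>2 + (1 - \<alpha>\<^sup>2) * (x * v1 + y * v2)\<^sup>2 / (x\<^sup>2 + y\<^sup>2)"
    using r ne
    apply (simp add: divide_simps)
    apply (simp add: algebra_simps power2_eq_square)
    apply auto
    done
  have ff: "f1 c1 x y = (x\<^sup>2 - y\<^sup>2) / (x\<^sup>2 + y\<^sup>2)" "f2 c2 x y = (2 * x * y) / (x\<^sup>2 + y\<^sup>2)"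
    using ne unfolding f1_def f2_def by auto
  show ?thesis unfolding rho_def prod.case ff by (rule alg)
qed

lemma rho_ge:
  assumes "(x, y) \<noteq> ((0::real), (0::real))" "\<alpha>\<^sup>2 \<le> 1"
  shows "rho \<alpha> c1 c2 (x, y, z) (v1, v2, v3) \<ge> \<alpha>\<^sup>2 * (v1\<^sup>2 + v2\<^sup>2) + v3\<^sup>2"
proof -
  have ne: "\<not> (x = 0 \<and> y = 0)" using assms by auto
  have r: "x\<^sup>2 + y\<^sup>2 > 0" using ne by (simp add: sum_power2_gt_zero_iff)
  have "(1 - \<alpha>\<^sup>2) * (x * v1 + y * v2)\<^sup>2 / (x\<^sup>2 + y\<^sup>2) \<ge> 0"
    using r assms by simp
  then show ?thesis using rho_eq[OF assms(1)] by simp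
qed

lemma rho_axis: "rho \<alpha> c1 c2 (0, 0, z) v = rho \<alpha> c1 c2 (0, 0, 0) v"
  unfolding rho_def by simp

lemma AE_interval_False:
  assumes "AE s in lborel. Q s" "(a::real) < b" "\<And>s. a < s \<Longrightarrow> s < b \<Longrightarrow> \<not> Q s"
  shows False
proof -
  from assms(1) obtain N where N: "{x \<in> space lborel. \<not> Q x} \<subseteq> N" "emeasure lborel N = 0" "N \<in> sets lborel"
    by (rule AE_E)
  have "{a<..<b} \<subseteq> N" using N(1) assms(3) by auto
  then have "emeasure lborel {a<..<b} \<le> emeasure lborel N"
    using N(3) by (intro emeasure_mono) auto
  then show False using N(2) assms(2) by simp
qed

lemma intv: "is_interval (I::real set) \<Longrightarrow> a \<in> I \<Longrightarrow> b \<in> I \<Longrightarrow> a \<le> x \<Longrightarrow> x \<le> b \<Longrightarrow> x \<in> I"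
  unfolding is_interval_1 by blast

lemma ev_upper:
  fixes I :: "real set"
  assumes "open I" "is_interval I" "s1 \<in> I"
  shows "eventually (\<lambda>s. s \<in> I \<and> s1 \<le> s) (upper_end I)"
proof (cases "bdd_above I")
  case True
  obtain e where e: "e > 0" "ball s1 e \<subseteq> I" using assms(1,3) open_contains_ball by blast
  have "s1 + e/2 \<in> I" using e by (auto simp: dist_real_def intro!: subsetD[OF e(2)])
  then have "s1 + e/2 \<le> Sup I" using True by (rule cSup_upper)
  then have lt: "s1 < Sup I" using e(1) by linarith
  have "\<forall>y>s1. y < Sup I \<longrightarrow> y \<in> I \<and> s1 \<le> y"
  proof (intro allI impI)
    fix y assume y: "s1 < y" "y < Sup I"
    then obtain w where "w \<in> I" "y < w" using less_cSup_iff[of I y] True assms(3) by auto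
    then show "y \<in> I \<and> s1 \<le> y" using intv[OF assms(2,3), of w y] y by auto
  qed
  then have "\<exists>b<Sup I. \<forall>y>b. y < Sup I \<longrightarrow> y \<in> I \<and> s1 \<le> y" using lt by blast
  then show ?thesis using True unfolding upper_end_def by (simp add: eventually_at_left_field)
next
  case False
  have "\<forall>y\<ge>s1. y \<in> I \<and> s1 \<le> y"
  proof (intro allI impI)
    fix y assume y: "s1 \<le> y"
    from False obtain w where "w \<in> I" "y < w" unfolding bdd_above_def by (meson not_le)
    then show "y \<in> I \<and> s1 \<le> y" using intv[OF assms(2,3), of w y] y by auto
  qed
  then show ?thesis using False unfolding upper_end_def by (simp add: eventually_at_top_linorder, intro exI[of _ s1], auto)
qed

lemma ev_lower:
  fixes I :: "real set"
  assumes "open I" "is_interval I" "s1 \<in> I"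
  shows "eventually (\<lambda>s. s \<in> I \<and> s \<le> s1) (lower_end I)"
proof (cases "bdd_below I")
  case True
  obtain e where e: "e > 0" "ball s1 e \<subseteq> I" using assms(1,3) open_contains_ball by blast
  have "s1 - e/2 \<in> I" using e by (auto simp: dist_real_def intro!: subsetD[OF e(2)])
  then have "Inf I \<le> s1 - e/2" using True by (rule cInf_lower)
  then have lt: "Inf I < s1" using e(1) by linarith
  have "\<forall>y>Inf I. y < s1 \<longrightarrow> y \<in> I \<and> y \<le> s1"
  proof (intro allI impI)
    fix y assume y: "Inf I < y" "y < s1"
    then obtain w where "w \<in> I" "w < y" using cInf_less_iff[of I y] True assms(3) by auto
    then show "y \<in> I \<and> y \<le> s1" using intv[OF assms(2) _ assms(3), of w y] y by auto
  qed
  then have "\<exists>b>Inf I. \<forall>y>Inf I. y < b \<longrightarrow> y \<in> I \<and> y \<le> s1" using lt by blast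
  then show ?thesis using True unfolding lower_end_def by (simp add: eventually_at_right_field)
next
  case False
  have "\<forall>y\<le>s1. y \<in> I \<and> y \<le> s1"
  proof (intro allI impI)
    fix y assume y: "y \<le> s1"
    from False obtain w where "w \<in> I" "w < y" unfolding bdd_below_def by (meson not_le)
    then show "y \<in> I \<and> y \<le> s1" using intv[OF assms(2) _ assms(3), of w y] y by auto
  qed
  then show ?thesis using False unfolding lower_end_def by (simp add: eventually_at_bot_linorder, intro exI[of _ s1], auto)
qed



lemma mc_up:
  fixes f :: "real \<Rightarrow> real"
  assumes "open I" "is_interval I" "s1 \<in> I"
   and mono: "\<And>a b. a\<in>I \<Longrightarrow> b\<in>I \<Longrightarrow> a \<le> b \<Longrightarrow> f a \<le> f b"
   and bd: "\<And>s. s\<in>I \<Longrightarrow> s1 \<le> s \<Longrightarrow> f s \<le> K"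
  shows "\<exists>L. (f \<longlongrightarrow> L) (upper_end I)"
proof -
  let ?J = "{s\<in>I. s1 \<le> s}"
  have ne: "f ` ?J \<noteq> {}" using assms(3) by auto
  have bdd: "bdd_above (f ` ?J)" using bd by (auto intro!: bdd_aboveI[of _ K])
  show ?thesis
  proof (intro exI increasing_tendsto)
    show "eventually (\<lambda>s. f s \<le> Sup (f`?J)) (upper_end I)"
      using ev_upper[OF assms(1-3)] by eventually_elim (auto intro!: cSup_upper bdd)
    fix x assume "x < Sup (f`?J)"
    then obtain s2 where s2: "s2 \<in> ?J" "x < f s2" using less_cSup_iff[OF ne bdd] by auto
    show "eventually (\<lambda>s. x < f s) (upper_end I)"
      using s2 by (intro eventually_mono[OF ev_upper[OF assms(1,2), of s2]]) (auto intro: less_le_trans[OF _ mono])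
  qed
qed

lemma mc_low:
  fixes f :: "real \<Rightarrow> real"
  assumes "open I" "is_interval I" "s1 \<in> I"
   and mono: "\<And>a b. a\<in>I \<Longrightarrow> b\<in>I \<Longrightarrow> a \<le> b \<Longrightarrow> f a \<le> f b"
   and bd: "\<And>s. s\<in>I \<Longrightarrow> s \<le> s1 \<Longrightarrow> K \<le> f s"
  shows "\<exists>L. (f \<longlongrightarrow> L) (lower_end I)"
proof -
  let ?J = "{s\<in>I. s \<le> s1}"
  have ne: "f ` ?J \<noteq> {}" using assms(3) by auto
  have bdd: "bdd_below (f ` ?J)" using bd by (auto intro!: bdd_belowI[of _ K])
  show ?thesis
  proof (intro exI decreasing_tendsto)
    show "eventually (\<lambda>s. Inf (f`?J) \<le> f s) (lower_end I)"
      using ev_lower[OF assms(1-3)] by eventually_elim (auto intro!: cInf_lower bdd)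
    fix x assume "Inf (f`?J) < x"
    then obtain s2 where s2: "s2 \<in> ?J" "f s2 < x" using cInf_less_iff[OF ne bdd] by auto
    show "eventually (\<lambda>s. f s < x) (lower_end I)"
      using s2 by (intro eventually_mono[OF ev_lower[OF assms(1,2), of s2]]) (auto intro: le_less_trans[OF mono])
  qed
qed

lemma mono_deriv:
  fixes f :: "real \<Rightarrow> real"
  assumes "is_interval I" "\<And>s. s\<in>I \<Longrightarrow> \<exists>y. DERIV f s :> y \<and> y \<ge> 0"
    "a \<in> I" "b \<in> I" "a \<le> b"
  shows "f a \<le> f b"
proof -
  have sub: "{a..b} \<subseteq> I" using intv[OF assms(1,3,4)] by auto
  show ?thesis
  proof (rule DERIV_nonneg_imp_increasing_open[OF assms(5)])
    fix x assume "a < x" "x < b"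
    then have "x \<in> I" using sub by auto
    then show "\<exists>y. DERIV f x :> y \<and> 0 \<le> y" using assms(2) by blast
  next
    show "continuous_on {a..b} f"
      using sub assms(2) by (intro continuous_at_imp_continuous_on) (meson DERIV_isCont subsetD)
  qed
qed

lemma core:
  fixes T X T' X' :: "real \<Rightarrow> real"
  assumes I: "open I" "is_interval I" "I \<noteq> {}"
  and dT: "\<And>s. s\<in>I \<Longrightarrow> (T has_real_derivative T' s) (at s)"
  and dX: "\<And>s. s\<in>I \<Longrightarrow> (X has_real_derivative X' s) (at s)"
  and bnd: "\<And>s. s\<in>I \<Longrightarrow> \<alpha> * \<bar>X' s\<bar> \<le> T' s" and \<alpha>: "\<alpha> > 0"
  shows core_up: "bdd_above (T`I) \<Longrightarrow> \<exists>L. (X \<longlongrightarrow> L) (upper_end I)"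
   and core_low: "bdd_below (T`I) \<Longrightarrow> \<exists>L. (X \<longlongrightarrow> L) (lower_end I)"
proof -
  define A where "A s = T s / \<alpha> + X s" for s
  define B where "B s = T s / \<alpha> - X s" for s
  have b2: "\<bar>X' s\<bar> \<le> T' s / \<alpha>" if "s \<in> I" for s
    using bnd[OF that] \<alpha> by (simp add: field_simps)
  have dA: "\<exists>y. DERIV A s :> y \<and> y \<ge> 0" if "s \<in> I" for s
  proof (intro exI conjI)
    show "DERIV A s :> T' s / \<alpha> + X' s" unfolding A_def[abs_def]
      using \<alpha> by (auto intro!: derivative_eq_intros dT dX that)
    show "0 \<le> T' s / \<alpha> + X' s" using b2[OF that] by linarith
  qed
  have dB: "\<exists>y. DERIV B s :> y \<and> y \<ge> 0" if "s \<in> I" for s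
  proof (intro exI conjI)
    show "DERIV B s :> T' s / \<alpha> - X' s" unfolding B_def[abs_def]
      using \<alpha> by (auto intro!: derivative_eq_intros dT dX that)
    show "0 \<le> T' s / \<alpha> - X' s" using b2[OF that] by linarith
  qed
  have mA: "\<And>a b. a\<in>I \<Longrightarrow> b\<in>I \<Longrightarrow> a \<le> b \<Longrightarrow> A a \<le> A b"
    using mono_deriv[OF I(2) dA] by blast
  have mB: "\<And>a b. a\<in>I \<Longrightarrow> b\<in>I \<Longrightarrow> a \<le> b \<Longrightarrow> B a \<le> B b"
    using mono_deriv[OF I(2) dB] by blast
  obtain s1 where s1: "s1 \<in> I" using I(3) by auto
  have XAB: "X = (\<lambda>s. (A s - B s) / 2)" unfolding A_def B_def by auto
  have sumAB: "A s + B s = 2 * T s / \<alpha>" for s unfolding A_def B_def by (simp add: field_simps)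
  show "\<exists>L. (X \<longlongrightarrow> L) (upper_end I)" if bA: "bdd_above (T`I)"
  proof -
    obtain M where M: "\<And>s. s \<in> I \<Longrightarrow> T s \<le> M" using bA by (auto simp: bdd_above_def)
    have TM: "2 * T s / \<alpha> \<le> 2 * M / \<alpha>" if "s \<in> I" for s
      using M[OF that] \<alpha> by (simp add: divide_right_mono)
    obtain LA where LA: "(A \<longlongrightarrow> LA) (upper_end I)"
    proof -
      have "\<exists>L. (A \<longlongrightarrow> L) (upper_end I)"
      proof (rule mc_up[OF I(1,2) s1 mA])
        fix s assume "s \<in> I" "s1 \<le> s"
        then show "A s \<le> 2 * M / \<alpha> - B s1" using TM[of s] sumAB[of s] mB[OF s1, of s] by linarith
      qed
      then show ?thesis using that by blast
    qed
    obtain LB where LB: "(B \<longlongrightarrow> LB) (upper_end I)"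
    proof -
      have "\<exists>L. (B \<longlongrightarrow> L) (upper_end I)"
      proof (rule mc_up[OF I(1,2) s1 mB])
        fix s assume "s \<in> I" "s1 \<le> s"
        then show "B s \<le> 2 * M / \<alpha> - A s1" using TM[of s] sumAB[of s] mA[OF s1, of s] by linarith
      qed
      then show ?thesis using that by blast
    qed
    have "((\<lambda>s. (A s - B s) / 2) \<longlongrightarrow> (LA - LB) / 2) (upper_end I)"
      by (auto intro!: tendsto_intros LA LB)
    then show ?thesis unfolding XAB by blast
  qed
  show "\<exists>L. (X \<longlongrightarrow> L) (lower_end I)" if bB: "bdd_below (T`I)"
  proof -
    obtain M where M: "\<And>s. s \<in> I \<Longrightarrow> M \<le> T s" using bB by (auto simp: bdd_below_def)
    have TM: "2 * M / \<alpha> \<le> 2 * T s / \<alpha>" if "s \<in> I" for s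
      using M[OF that] \<alpha> by (simp add: divide_right_mono)
    obtain LA where LA: "(A \<longlongrightarrow> LA) (lower_end I)"
    proof -
      have "\<exists>L. (A \<longlongrightarrow> L) (lower_end I)"
      proof (rule mc_low[OF I(1,2) s1 mA])
        fix s assume "s \<in> I" "s \<le> s1"
        then show "2 * M / \<alpha> - B s1 \<le> A s" using TM[of s] sumAB[of s] mB[OF _ s1, of s] by linarith
      qed
      then show ?thesis using that by blast
    qed
    obtain LB where LB: "(B \<longlongrightarrow> LB) (lower_end I)"
    proof -
      have "\<exists>L. (B \<longlongrightarrow> L) (lower_end I)"
      proof (rule mc_low[OF I(1,2) s1 mB])
        fix s assume "s \<in> I" "s \<le> s1"
        then show "2 * M / \<alpha> - A s1 \<le> B s" using TM[of s] sumAB[of s] mA[OF _ s1, of s] by linarith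
      qed
      then show ?thesis using that by blast
    qed
    have "((\<lambda>s. (A s - B s) / 2) \<longlongrightarrow> (LA - LB) / 2) (lower_end I)"
      by (auto intro!: tendsto_intros LA LB)
    then show ?thesis unfolding XAB by blast
  qed
qed



lemma ev_in_open_right:
  fixes I :: "real set"
  assumes "open I" "s0 \<in> I"
  shows "eventually (\<lambda>s. s \<in> I) (at_right s0)"
proof -
  obtain e where e: "e > 0" "ball s0 e \<subseteq> I" using assms open_contains_ball by blast
  have "\<forall>y>s0. y < s0 + e \<longrightarrow> y \<in> I"
    using e by (auto simp: dist_real_def intro!: subsetD[OF e(2)])
  then show ?thesis unfolding eventually_at_right_field using e(1) by (intro exI[of _ "s0+e"]) auto
qed

lemma ev_pos_right:
  fixes f :: "real \<Rightarrow> real"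
  assumes "isCont f x" "f x > 0"
  shows "eventually (\<lambda>s. f s > 0) (at_right x)"
proof -
  have "eventually (\<lambda>s. 0 < f s) (at x)" using order_tendstoD(1)[OF isContD[OF assms(1)] assms(2)] .
  then show ?thesis using eventually_at_split by blast
qed

lemma ev_nonzero_right:
  fixes f :: "real \<Rightarrow> real"
  assumes d: "(f has_real_derivative d) (at x)" and "d \<noteq> 0"
  shows "eventually (\<lambda>s. f s \<noteq> 0) (at_right x)"
proof (cases "f x = 0")
  case False
  have "eventually (\<lambda>s. f s \<noteq> 0) (at x)"
    using tendsto_imp_eventually_ne[OF isContD[OF DERIV_isCont[OF d]] False] .
  then show ?thesis using eventually_at_split by blast
next
  case True
  show ?thesis
  proof (cases "d > 0")
    case pos: True
    obtain e where e: "e > 0" "\<forall>h>0. h < e \<longrightarrow> f x < f (x + h)" using DERIV_pos_inc_right[OF d pos] by blast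
    have "\<forall>y>x. y < x + e \<longrightarrow> f y \<noteq> 0"
    proof (intro allI impI)
      fix y assume "x < y" "y < x + e"
      then have "f x < f (x + (y - x))" using e(2)[rule_format, of "y - x"] by linarith
      then show "f y \<noteq> 0" using True by simp
    qed
    then show ?thesis unfolding eventually_at_right_field using e(1) by (intro exI[of _ "x+e"]) auto
  next
    case neg: False
    then have "d < 0" using assms(2) by simp
    obtain e where e: "e > 0" "\<forall>h>0. h < e \<longrightarrow> f x > f (x + h)" using DERIV_neg_dec_right[OF d \<open>d < 0\<close>] by blast
    have "\<forall>y>x. y < x + e \<longrightarrow> f y \<noteq> 0"
    proof (intro allI impI)
      fix y assume "x < y" "y < x + e"
      then have "f x > f (x + (y - x))" using e(2)[rule_format, of "y - x"] by linarith
      then show "f y \<noteq> 0" using True by simp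
    qed
    then show ?thesis unfolding eventually_at_right_field using e(1) by (intro exI[of _ "x+e"]) auto
  qed
qed

lemma hvd_fst:
  "(f has_vector_derivative f') F \<Longrightarrow> ((\<lambda>x. fst (f x)) has_vector_derivative fst f') F"
  unfolding has_vector_derivative_def by (drule has_derivative_fst) simp

lemma hvd_snd:
  "(f has_vector_derivative f') F \<Longrightarrow> ((\<lambda>x. snd (f x)) has_vector_derivative snd f') F"
  unfolding has_vector_derivative_def by (drule has_derivative_snd) simp

lemma rho_axis_eq:
  "rho \<alpha> c1 c2 (0, 0, z) (v1, v2, v3) =
    ((1 + \<alpha>\<^sup>2) / 2 + (1 - \<alpha>\<^sup>2) / 2 * c1) * v1\<^sup>2
    + ((1 + \<alpha>\<^sup>2) / 2 - (1 - \<alpha>\<^sup>2) / 2 * c1) * v2\<^sup>2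
    + (1 - \<alpha>\<^sup>2) * c2 * v1 * v2 + v3\<^sup>2"
  unfolding rho_def f1_def f2_def by simp

lemma core_set:
  fixes T T' :: "real \<Rightarrow> real"
  assumes I: "open I" "is_interval I" "I \<noteq> {}"
  and dT: "\<And>s. s\<in>I \<Longrightarrow> (T has_real_derivative T' s) (at s)"
  and pos: "\<And>s. s\<in>I \<Longrightarrow> T' s > 0" and \<alpha>: "\<alpha> > 0"
  and ws: "\<And>W W' s. (W, W') \<in> S \<Longrightarrow> s \<in> I \<Longrightarrow> (W has_real_derivative W' s) (at s) \<and> \<alpha> * \<bar>W' s\<bar> \<le> T' s"
  and bd: "bdd_above (T`I) \<or> bdd_below (T`I)"
  shows "\<exists>F. (F = upper_end I \<or> F = lower_end I) \<and> (\<forall>(W, W')\<in>S. \<exists>L. (W \<longlongrightarrow> L) F)"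
proof (cases "bdd_above (T`I)")
  case True
  have "\<forall>(W, W')\<in>S. \<exists>L. (W \<longlongrightarrow> L) (upper_end I)"
  proof (intro ballI, clarify)
    fix W W' assume "(W, W') \<in> S"
    then show "\<exists>L. (W \<longlongrightarrow> L) (upper_end I)"
      using core_up[OF I dT _ _ \<alpha> True, of W W'] ws by blast
  qed
  then show ?thesis by blast
next
  case False
  then have bb: "bdd_below (T`I)" using bd by auto
  have "\<forall>(W, W')\<in>S. \<exists>L. (W \<longlongrightarrow> L) (lower_end I)"
  proof (intro ballI, clarify)
    fix W W' assume "(W, W') \<in> S"
    then show "\<exists>L. (W \<longlongrightarrow> L) (lower_end I)"
      using core_low[OF I dT _ _ \<alpha> bb, of W W'] ws by blast
  qed
  then show ?thesis by blast
qed



lemma curve: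
  fixes \<gamma> \<gamma>' :: "real \<Rightarrow> real \<times> real \<times> real \<times> real"
  assumes \<alpha>: "0 < \<alpha>" "\<alpha> < 1"
  and I: "open I" "is_interval I" "I \<noteq> {}"
  and d\<gamma>: "\<And>s. s\<in>I \<Longrightarrow> (\<gamma> has_vector_derivative \<gamma>' s) (at s)"
  and c\<gamma>': "continuous_on I \<gamma>'"
  and inext: "inextendible I \<gamma>"
  and nz: "\<And>s. s\<in>I \<Longrightarrow> \<gamma>' s \<noteq> 0"
  and ae: "AE s in lborel. s \<in> I \<longrightarrow> g_alpha \<alpha> c1 c2 (\<gamma> s) (\<gamma>' s) < 0"
  shows "\<exists>!s. s\<in>I \<and> fst (\<gamma> s) = t0"
proof -
  define T where "T s = fst (\<gamma> s)" for s
  define X where "X s = fst (snd (\<gamma> s))" for s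
  define Y where "Y s = fst (snd (snd (\<gamma> s)))" for s
  define Z where "Z s = snd (snd (snd (\<gamma> s)))" for s
  define T' where "T' s = fst (\<gamma>' s)" for s
  define X' where "X' s = fst (snd (\<gamma>' s))" for s
  define Y' where "Y' s = fst (snd (snd (\<gamma>' s)))" for s
  define Z' where "Z' s = snd (snd (snd (\<gamma>' s)))" for s
  have \<gamma>eq: "\<gamma> = (\<lambda>s. (T s, X s, Y s, Z s))" unfolding T_def X_def Y_def Z_def by simp
  have \<gamma>'eq: "\<gamma>' s = (T' s, X' s, Y' s, Z' s)" for s unfolding T'_def X'_def Y'_def Z'_def by simp
  have dT: "(T has_real_derivative T' s) (at s)" if "s \<in> I" for s
    unfolding has_real_derivative_iff_has_vector_derivative T_def[abs_def] T'_def
    by (rule hvd_fst[OF d\<gamma>[OF that]])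
  have dX: "(X has_real_derivative X' s) (at s)" if "s \<in> I" for s
    unfolding has_real_derivative_iff_has_vector_derivative X_def[abs_def] X'_def
    by (rule hvd_fst[OF hvd_snd[OF d\<gamma>[OF that]]])
  have dY: "(Y has_real_derivative Y' s) (at s)" if "s \<in> I" for s
    unfolding has_real_derivative_iff_has_vector_derivative Y_def[abs_def] Y'_def
    by (rule hvd_fst[OF hvd_snd[OF hvd_snd[OF d\<gamma>[OF that]]]])
  have dZ: "(Z has_real_derivative Z' s) (at s)" if "s \<in> I" for s
    unfolding has_real_derivative_iff_has_vector_derivative Z_def[abs_def] Z'_def
    by (rule hvd_snd[OF hvd_snd[OF hvd_snd[OF d\<gamma>[OF that]]]])
  have cT': "continuous_on I T'" unfolding T'_def[abs_def] by (intro continuous_intros c\<gamma>')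
  have cX': "continuous_on I X'" unfolding X'_def[abs_def] by (intro continuous_intros c\<gamma>')
  have cY': "continuous_on I Y'" unfolding Y'_def[abs_def] by (intro continuous_intros c\<gamma>')
  have cZ': "continuous_on I Z'" unfolding Z'_def[abs_def] by (intro continuous_intros c\<gamma>')
  define R where "R s = rho \<alpha> c1 c2 (X s, Y s, Z s) (X' s, Y' s, Z' s)" for s
  have geq: "g_alpha \<alpha> c1 c2 (\<gamma> s) (\<gamma>' s) = - (T' s)\<^sup>2 + R s" for s
    unfolding g_alpha_def R_def \<gamma>'eq by (simp add: \<gamma>eq)
  have a2: "\<alpha>\<^sup>2 \<le> 1" using \<alpha> by (simp add: power_le_one)
  have a2p: "\<alpha>\<^sup>2 > 0" using \<alpha> by simp
  have bound: "\<alpha>\<^sup>2 * ((X' s)\<^sup>2 + (Y' s)\<^sup>2 + (Z' s)\<^sup>2) \<le> (T' s)\<^sup>2" if s0: "s \<in> I" for s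
  proof (rule ccontr)
    assume "\<not> ?thesis"
    then have lt: "(T' s)\<^sup>2 < \<alpha>\<^sup>2 * ((X' s)\<^sup>2 + (Y' s)\<^sup>2 + (Z' s)\<^sup>2)" by simp
    define p where "p u = \<alpha>\<^sup>2 * ((X' u)\<^sup>2 + (Y' u)\<^sup>2) + (Z' u)\<^sup>2" for u
    have "\<alpha>\<^sup>2 * (Z' s)\<^sup>2 \<le> (Z' s)\<^sup>2" using a2 by (simp add: mult_left_le_one_le)
    then have ps: "(T' s)\<^sup>2 < p s" using lt unfolding p_def by (simp add: algebra_simps)
    have cp: "continuous_on I (\<lambda>u. p u - (T' u)\<^sup>2)" unfolding p_def
      by (intro continuous_intros cT' cX' cY' cZ')
    have evp: "eventually (\<lambda>u. (T' u)\<^sup>2 < p u) (at_right s)"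
      using ev_pos_right[where f="\<lambda>u. p u - (T' u)\<^sup>2" and x=s] cp s0 I(1) ps
      by (simp add: continuous_on_eq_continuous_at)
    have evI: "eventually (\<lambda>u. u \<in> I) (at_right s)" using ev_in_open_right[OF I(1) s0] .
    have offax: "(T' u)\<^sup>2 < R u" if "(X u, Y u) \<noteq> (0, 0)" "(T' u)\<^sup>2 < p u" for u
    proof -
      have "rho \<alpha> c1 c2 (X u, Y u, Z u) (X' u, Y' u, Z' u) \<ge> \<alpha>\<^sup>2 * ((X' u)\<^sup>2 + (Y' u)\<^sup>2) + (Z' u)\<^sup>2"
        by (rule rho_ge[OF that(1) a2])
      then show ?thesis using that(2) unfolding R_def p_def by simp
    qed
    have evR: "eventually (\<lambda>u. u \<in> I \<and> (T' u)\<^sup>2 < R u) (at_right s)"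
    proof (cases "X' s \<noteq> 0 \<or> Y' s \<noteq> 0")
      case nz2: True
      have "eventually (\<lambda>u. (X u, Y u) \<noteq> (0, 0)) (at_right s)"
      proof (cases "X' s \<noteq> 0")
        case True
        show ?thesis using ev_nonzero_right[OF dX[OF s0] True] by eventually_elim simp
      next
        case False
        then have Yn: "Y' s \<noteq> 0" using nz2 by simp
        show ?thesis using ev_nonzero_right[OF dY[OF s0] Yn] by eventually_elim simp
      qed
      then show ?thesis using evp evI by eventually_elim (use offax in auto)
    next
      case False
      define h where "h u = ((1 + \<alpha>\<^sup>2) / 2 + (1 - \<alpha>\<^sup>2) / 2 * c1) * (X' u)\<^sup>2
        + ((1 + \<alpha>\<^sup>2) / 2 - (1 - \<alpha>\<^sup>2) / 2 * c1) * (Y' u)\<^sup>2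
        + (1 - \<alpha>\<^sup>2) * c2 * X' u * Y' u + (Z' u)\<^sup>2" for u
      have "\<alpha>\<^sup>2 * (Z' s)\<^sup>2 \<le> (Z' s)\<^sup>2" using a2 by (simp add: mult_left_le_one_le)
      then have hs: "(T' s)\<^sup>2 < h s" using lt False unfolding h_def by simp
      have ch: "continuous_on I (\<lambda>u. h u - (T' u)\<^sup>2)" unfolding h_def
        by (intro continuous_intros cT' cX' cY' cZ')
      have evh: "eventually (\<lambda>u. (T' u)\<^sup>2 < h u) (at_right s)"
        using ev_pos_right[where f="\<lambda>u. h u - (T' u)\<^sup>2" and x=s] ch s0 I(1) hs
        by (simp add: continuous_on_eq_continuous_at)
      have onax: "R u = h u" if "X u = 0" "Y u = 0" for u
        unfolding R_def h_def using that by (simp add: rho_axis_eq)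
      show ?thesis using evp evI evh
      proof eventually_elim
        case (elim u)
        show ?case
        proof (cases "(X u, Y u) = (0, 0)")
          case True
          then show ?thesis using onax[of u] elim by simp
        next
          case False
          then show ?thesis using offax[OF False] elim by simp
        qed
      qed
    qed
    then obtain b where b: "b > s" "\<And>u. s < u \<Longrightarrow> u < b \<Longrightarrow> u \<in> I \<and> (T' u)\<^sup>2 < R u"
      unfolding eventually_at_right_field by blast
    show False
    proof (rule AE_interval_False[OF ae b(1)])
      fix u assume "s < u" "u < b"
      then show "\<not> (u \<in> I \<longrightarrow> g_alpha \<alpha> c1 c2 (\<gamma> u) (\<gamma>' u) < 0)"
        using b(2)[of u] geq[of u] by simp
    qed
  qed
  have T'nz: "T' s \<noteq> 0" if "s \<in> I" for s
  proof
    assume "T' s = 0"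
    then have "\<alpha>\<^sup>2 * ((X' s)\<^sup>2 + (Y' s)\<^sup>2 + (Z' s)\<^sup>2) \<le> 0" using bound[OF that] by simp
    then have "(X' s)\<^sup>2 + (Y' s)\<^sup>2 + (Z' s)\<^sup>2 \<le> 0" using a2p by (simp add: mult_le_0_iff)
    then have "(X' s)\<^sup>2 = 0 \<and> (Y' s)\<^sup>2 = 0 \<and> (Z' s)\<^sup>2 = 0"
      using zero_le_power2[of "X' s"] zero_le_power2[of "Y' s"] zero_le_power2[of "Z' s"] by linarith
    then have "X' s = 0" "Y' s = 0" "Z' s = 0" by simp_all
    then have "\<gamma>' s = 0" using \<open>T' s = 0\<close> by (simp add: \<gamma>'eq zero_prod_def)
    then show False using nz[OF that] by simp
  qed
  have sgn: "(\<forall>s\<in>I. T' s > 0) \<or> (\<forall>s\<in>I. T' s < 0)"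
  proof (rule ccontr)
    assume "\<not> ?thesis"
    then obtain a b where ab: "a \<in> I" "b \<in> I" "T' a \<le> 0" "T' b \<ge> 0" by (auto simp: not_less)
    have "is_interval (T' ` I)"
      using connected_continuous_image[OF cT'] I(2) by (simp add: is_interval_connected_1)
    then have "0 \<in> T' ` I" using intv[of "T' ` I" "T' a" "T' b" 0] ab by auto
    then show False using T'nz by auto
  qed
  have absb: "\<alpha> * \<bar>W s\<bar> \<le> \<bar>T' s\<bar>" if "s \<in> I" "W = X' \<or> W = Y' \<or> W = Z'" for W s
  proof -
    have "\<alpha>\<^sup>2 * (W s)\<^sup>2 \<le> \<alpha>\<^sup>2 * ((X' s)\<^sup>2 + (Y' s)\<^sup>2 + (Z' s)\<^sup>2)"
      using that(2) a2p by (auto intro!: mult_left_mono)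
    then have "(\<alpha> * \<bar>W s\<bar>)\<^sup>2 \<le> \<bar>T' s\<bar>\<^sup>2" using bound[OF that(1)] by (simp add: power_mult_distrib)
    then show ?thesis by (rule power2_le_imp_le) simp
  qed
  have absT: "\<alpha> * \<bar>T' s\<bar> \<le> \<bar>T' s\<bar>" for s using \<alpha> by (simp add: mult_left_le_one_le)
  have contT: "continuous_on I T"
    by (intro continuous_at_imp_continuous_on) (use DERIV_isCont dT in blast)
  have uniq: "s1 = s2" if "s1 \<in> I" "s2 \<in> I" "T s1 = T s2" for s1 s2
  proof (rule ccontr)
    assume ne: "s1 \<noteq> s2"
    have "\<exists>z\<in>I. T' z = 0" if ab: "a \<in> I" "b \<in> I" "a < b" "T a = T b" for a b
    proof -
      have sub: "{a..b} \<subseteq> I" using intv[OF I(2) ab(1,2)] by auto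
      obtain z where z: "a < z" "z < b" "DERIV T z :> 0"
      proof (rule exE[OF Rolle[OF ab(3,4)]])
        show "continuous_on {a..b} T" using contT sub continuous_on_subset by blast
        fix x assume "a < x" "x < b"
        then have "x \<in> I" using sub by auto
        then show "T differentiable (at x)" using dT real_differentiable_def by blast
      qed blast
      have "z \<in> I" using sub z by auto
      then show ?thesis using DERIV_unique[OF dT z(3)] by blast
    qed
    then show False using ne that T'nz
      by (metis linorder_neqE_linordered_idom)
  qed
  have exist: "\<exists>s\<in>I. T s = t0"
  proof (rule ccontr)
    assume nex: "\<not> ?thesis"
    have iv: "is_interval (T ` I)"
      using connected_continuous_image[OF contT] I(2) by (simp add: is_interval_connected_1)
    have bdd: "bdd_above (T`I) \<or> bdd_below (T`I)"
    proof (cases "\<forall>s\<in>I. T s < t0")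
      case True
      then have "bdd_above (T`I)" by (auto intro!: bdd_aboveI[of _ t0] less_imp_le)
      then show ?thesis by simp
    next
      case False
      then obtain a where a: "a \<in> I" "T a > t0" using nex by (auto simp: not_less le_less)
      have "\<forall>s\<in>I. T s > t0"
      proof
        fix s assume s: "s \<in> I"
        show "T s > t0"
        proof (rule ccontr)
          assume "\<not> T s > t0"
          then have "t0 \<in> T ` I" using intv[OF iv, of "T s" "T a" t0] s a by auto
          then show False using nex by auto
        qed
      qed
      then have "bdd_below (T`I)" by (auto intro!: bdd_belowI[of _ t0] less_imp_le)
      then show ?thesis by simp
    qed
    let ?S = "{(T, T'), (X, X'), (Y, Y'), (Z, Z')}"
    have "\<exists>F. (F = upper_end I \<or> F = lower_end I) \<and> (\<forall>(W, W')\<in>?S. \<exists>L. (W \<longlongrightarrow> L) F)"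
      using sgn
    proof
      assume pos: "\<forall>s\<in>I. T' s > 0"
      show ?thesis
      proof (rule core_set[OF I dT _ \<alpha>(1) _ bdd])
        show "\<And>s. s \<in> I \<Longrightarrow> 0 < T' s" using pos by blast
        fix W W' s assume "(W, W') \<in> ?S" "s \<in> I"
        then show "(W has_real_derivative W' s) (at s) \<and> \<alpha> * \<bar>W' s\<bar> \<le> T' s"
          using dT dX dY dZ absb[of s] absT[of s] pos by auto
      qed
    next
      assume neg: "\<forall>s\<in>I. T' s < 0"
      have bdd': "bdd_above ((\<lambda>s. - T s)`I) \<or> bdd_below ((\<lambda>s. - T s)`I)"
        using bdd by (simp only: bdd_above_uminus_image bdd_below_uminus_image) auto
      show ?thesis
      proof (rule core_set[OF I _ _ \<alpha>(1) _ bdd'])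
        show "\<And>s. s \<in> I \<Longrightarrow> ((\<lambda>s. - T s) has_real_derivative - T' s) (at s)"
          using dT by (auto intro!: derivative_eq_intros)
        show "\<And>s. s \<in> I \<Longrightarrow> 0 < - T' s" using neg by fastforce
        fix W W' s assume "(W, W') \<in> ?S" "s \<in> I"
        then show "(W has_real_derivative W' s) (at s) \<and> \<alpha> * \<bar>W' s\<bar> \<le> - T' s"
          using dT dX dY dZ absb[of s] absT[of s] neg by auto
      qed
    qed
    then obtain F LT LX LY LZ where F: "F = upper_end I \<or> F = lower_end I"
      and l: "(T \<longlongrightarrow> LT) F" "(X \<longlongrightarrow> LX) F" "(Y \<longlongrightarrow> LY) F" "(Z \<longlongrightarrow> LZ) F"
      by (auto; blast)
    have "(\<gamma> \<longlongrightarrow> (LT, LX, LY, LZ)) F" unfolding \<gamma>eq by (intro tendsto_Pair l)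
    then show False using inext F unfolding inextendible_def by blast
  qed
  show ?thesis using exist uniq unfolding T_def by blast
qed


theorem mainTheorem2:
  fixes \<alpha> c1 c2 :: real
  assumes "0 < \<alpha>" and "\<alpha> < 1"
  shows "(\<forall>x y z v1 v2 v3. (x, y) \<noteq> (0, 0) \<longrightarrow>
            rho \<alpha> c1 c2 (x, y, z) (v1, v2, v3) \<ge> \<alpha>\<^sup>2 * (v1\<^sup>2 + v2\<^sup>2) + v3\<^sup>2)
       \<and> (\<forall>(t0::real) (I::real set) (\<gamma>::real \<Rightarrow> real \<times> (real \<times> real \<times> real)) \<gamma>'.
            open I \<and> is_interval I \<and> I \<noteq> {}
            \<and> (\<forall>s\<in>I. (\<gamma> has_vector_derivative \<gamma>' s) (at s))
            \<and> continuous_on I \<gamma>'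
            \<and> inextendible I \<gamma>
            \<and> (\<forall>s\<in>I. \<gamma>' s \<noteq> 0)
            \<and> (AE s in lborel. s \<in> I \<longrightarrow> g_alpha \<alpha> c1 c2 (\<gamma> s) (\<gamma>' s) < 0)
            \<longrightarrow> (\<exists>!s. s \<in> I \<and> fst (\<gamma> s) = t0))"
proof (intro conjI allI impI)
  fix x y z v1 v2 v3 :: real
  assume "(x, y) \<noteq> (0, 0)"
  moreover have "\<alpha>\<^sup>2 \<le> 1" using assms by (simp add: power_le_one)
  ultimately show "rho \<alpha> c1 c2 (x, y, z) (v1, v2, v3) \<ge> \<alpha>\<^sup>2 * (v1\<^sup>2 + v2\<^sup>2) + v3\<^sup>2"
    by (rule rho_ge)
next
  fix t0 :: real and I :: "real set" and \<gamma> :: "real \<Rightarrow> real \<times> (real \<times> real \<times> real)" and \<gamma>'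
  assume H: "open I \<and> is_interval I \<and> I \<noteq> {}
            \<and> (\<forall>s\<in>I. (\<gamma> has_vector_derivative \<gamma>' s) (at s))
            \<and> continuous_on I \<gamma>'
            \<and> inextendible I \<gamma>
            \<and> (\<forall>s\<in>I. \<gamma>' s \<noteq> 0)
            \<and> (AE s in lborel. s \<in> I \<longrightarrow> g_alpha \<alpha> c1 c2 (\<gamma> s) (\<gamma>' s) < 0)"
  show "\<exists>!s. s \<in> I \<and> fst (\<gamma> s) = t0"
    using H by (intro curve[OF assms]) auto
qed

end
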